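(* Let $(\mathbf F,\prec)$ be an IS-family over a finite set $V$. Let $S\in\mathbf F$ and $v\in Vis(S)\setminus S$. Then there is $S^*\in\mathbf F$ with $S^*\prec S$ such that $v\in hat(S^* )$ and $S$ is the witness of $v$ w.r.t. $S^*$.
   Context: Let $V$ be a finite set, $n=|V|$, $\mathbf F$ a family of subsets of $V$ and $\prec$ a strict partial order on $\mathbf F$; $S\preceq S'$ means $S\prec S'$ or $S=S'$. For $S\in\mathbf F$ and $v\in V$, $S$ covers $v$ if there is $S'\in\mathbf F$ with $S'\prec S$ and $v\in S'\setminus S$. $Pred(S)$ is the set of $S'\in\mathbf F$ with $S'\prec S$ such that there is no $S''\in\mathbf F$ with $S'\prec S''\prec S$. The visible set $Vis(S)$ is the set of $v\in V$ such that $v\in S'$ for some $S'\in Pred(S)$ and $v$ is not covered by any element of $Pred(S)$. For $S\in\mathbf F$ and $v\in S$, a witness of $v$ w.r.t. $S$ is a $\prec$-minimal element $S'\in\mathbf F$ with $S\prec S'$ and $v\in S\setminus S'$. $(\mathbf F,\prec)$ is an IS-family if: (SE) there is a unique element $sm(\mathbf F)\in\mathbf F$ with $sm(\mathbf F)\prec S$ for every other $S\in\mathbf F$; (SM) $S_1\prec S_2$ implies $|S_1|<|S_2|$; (SW) for every $S\in\mathbf F$ and $v\in S$ there is at most one witness of $v$ w.r.t. $S$; (TE) if $S_1\prec S_2\prec S_3$ are in $\mathbf F$ and $v\in S_1\setminus S_2$ then $v\in S_1\setminus S_3$; (LVS) for every $S\in\mathbf F$ and $S'\in Pred(S)$, $|S'|\le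 |Vis(S)|$; (DVS) for every $S\in\mathbf F$ with $S\ne sm(\mathbf F)$, $Vis(S)$ is not a subset of $S$; (EC) $sm(\mathbf F)$ can be computed in $O(n^3)$ time, for given $S\in\mathbf F$ and $v\in S$ the witness of $v$ w.r.t. $S$ can be computed (or its nonexistence reported) in $O(n^3)$ time, and $S_1\prec S_2$ can be tested in $O(|S_1|)$ time. Notation: $hat(S)=S\setminus\bigcup_{S'\prec S}S'$. *)

theory Defs
  imports Main
begin

(* A family F of subsets of V with a strict partial order prec on F.
   prec is a relation on sets; only its restriction to F matters. *)

definition covers :: "'a set set \<Rightarrow> ('a set \<Rightarrow> 'a set \<Rightarrow> bool) \<Rightarrow> 'a set \<Rightarrow> 'a \<Rightarrow> bool" where
  "covers F prec S v \<longleftrightarrow> (\<exists>S'\<in>F. prec S' S \<and> v \<in> S' - S)"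

definition Pred :: "'a set set \<Rightarrow> ('a set \<Rightarrow> 'a set \<Rightarrow> bool) \<Rightarrow> 'a set \<Rightarrow> 'a set set" where
  "Pred F prec S = {S'\<in>F. prec S' S \<and> \<not> (\<exists>S''\<in>F. prec S' S'' \<and> prec S'' S)}"

definition Vis :: "'a set \<Rightarrow> 'a set set \<Rightarrow> ('a set \<Rightarrow> 'a set \<Rightarrow> bool) \<Rightarrow> 'a set \<Rightarrow> 'a set" where
  "Vis V F prec S = {v\<in>V. (\<exists>S'\<in>Pred F prec S. v \<in> S') \<and>
                           \<not> (\<exists>S'\<in>Pred F prec S. covers F prec S' v)}"

definition is_witness :: "'a set set \<Rightarrow> ('a set \<Rightarrow> 'a set \<Rightarrow> bool) \<Rightarrow> 'a set \<Rightarrow> 'a \<Rightarrow> 'a set \<Rightarrow> bool" where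
  "is_witness F prec S v S' \<longleftrightarrow>
     S' \<in> F \<and> prec S S' \<and> v \<in> S - S' \<and>
     \<not> (\<exists>S''\<in>F. prec S S'' \<and> v \<in> S - S'' \<and> prec S'' S')"

definition hat :: "'a set set \<Rightarrow> ('a set \<Rightarrow> 'a set \<Rightarrow> bool) \<Rightarrow> 'a set \<Rightarrow> 'a set" where
  "hat F prec S = S - \<Union>{S'\<in>F. prec S' S}"

definition strict_po_on :: "'a set set \<Rightarrow> ('a set \<Rightarrow> 'a set \<Rightarrow> bool) \<Rightarrow> bool" where
  "strict_po_on F prec \<longleftrightarrow>
     (\<forall>S\<in>F. \<not> prec S S) \<and>
     (\<forall>S1\<in>F. \<forall>S2\<in>F. \<forall>S3\<in>F. prec S1 S2 \<longrightarrow> prec S2 S3 \<longrightarrow> prec S1 S3)"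

(* IS-family; the algorithmic condition (EC) is not formalized. *)
definition IS_family :: "'a set \<Rightarrow> 'a set set \<Rightarrow> ('a set \<Rightarrow> 'a set \<Rightarrow> bool) \<Rightarrow> bool" where
  "IS_family V F prec \<longleftrightarrow>
     finite V \<and> (\<forall>S\<in>F. S \<subseteq> V) \<and> strict_po_on F prec \<and>
     (\<forall>S1 S2. prec S1 S2 \<longrightarrow> S1 \<in> F \<and> S2 \<in> F) \<and>
     \<comment> \<open>SE\<close>
     (\<exists>!S0. S0 \<in> F \<and> (\<forall>S\<in>F. S \<noteq> S0 \<longrightarrow> prec S0 S)) \<and>
     \<comment> \<open>SM\<close>
     (\<forall>S1\<in>F. \<forall>S2\<in>F. prec S1 S2 \<longrightarrow> card S1 < card S2) \<and>
     \<comment> \<open>SW\<close>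
     (\<forall>S\<in>F. \<forall>v\<in>S. \<forall>W1 W2. is_witness F prec S v W1 \<longrightarrow> is_witness F prec S v W2 \<longrightarrow> W1 = W2) \<and>
     \<comment> \<open>TE\<close>
     (\<forall>S1\<in>F. \<forall>S2\<in>F. \<forall>S3\<in>F. \<forall>v. prec S1 S2 \<longrightarrow> prec S2 S3 \<longrightarrow> v \<in> S1 - S2 \<longrightarrow> v \<in> S1 - S3) \<and>
     \<comment> \<open>LVS\<close>
     (\<forall>S\<in>F. \<forall>S'\<in>Pred F prec S. card S' \<le> card (Vis V F prec S)) \<and>
     \<comment> \<open>DVS\<close>
     (\<forall>S0. S0 \<in> F \<and> (\<forall>S\<in>F. S \<noteq> S0 \<longrightarrow> prec S0 S) \<longrightarrow>
        (\<forall>S\<in>F. S \<noteq> S0 \<longrightarrow> \<not> Vis V F prec S \<subseteq> S))"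

end

theory Submission
  imports Defs
begin

theorem proposition3:
  assumes "IS_family V F prec"
    and "S \<in> F"
    and "v \<in> Vis V F prec S - S"
  shows "\<exists>S'\<in>F. prec S' S \<and> v \<in> hat F prec S' \<and> is_witness F prec S' v S"
proof -
  have inF: "\<And>A B. prec A B \<Longrightarrow> A \<in> F \<and> B \<in> F" using assms(1) unfolding IS_family_def by simp
  have tr: "\<And>A B C. prec A B \<Longrightarrow> prec B C \<Longrightarrow> prec A C"
  proof -
    fix A B C assume h: "prec A B" "prec B C"
    have "strict_po_on F prec" using assms(1) unfolding IS_family_def by simp
    then show "prec A C" using h inF unfolding strict_po_on_def by meson
  qed
  have sm: "\<And>A B. prec A B \<Longrightarrow> card A < card B"
  proof -
    fix A B assume h: "prec A B"
    have "\<forall>S1\<in>F. \<forall>S2\<in>F. prec S1 S2 \<longrightarrow> card S1 < card S2" using assms(1) unfolding IS_family_def by simp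
    then show "card A < card B" using h inF by meson
  qed
  have te: "\<And>A B C w. prec A B \<Longrightarrow> prec B C \<Longrightarrow> w \<in> A - B \<Longrightarrow> w \<in> A - C"
  proof -
    fix A B C w assume h: "prec A B" "prec B C" "w \<in> A - B"
    have "\<forall>S1\<in>F. \<forall>S2\<in>F. \<forall>S3\<in>F. \<forall>v. prec S1 S2 \<longrightarrow> prec S2 S3 \<longrightarrow> v \<in> S1 - S2 \<longrightarrow> v \<in> S1 - S3" using assms(1) unfolding IS_family_def by simp
    then show "w \<in> A - C" using h inF by meson
  qed
  from assms(3) obtain S1 where S1: "S1 \<in> Pred F prec S" "v \<in> S1"
    and nc: "\<And>P. P \<in> Pred F prec S \<Longrightarrow> \<not> covers F prec P v" and vS: "v \<notin> S"
    unfolding Vis_def by blast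
  have "prec S1 S" using S1 unfolding Pred_def by blast
  then obtain Ss where Ss: "prec Ss S \<and> v \<in> Ss" and min: "\<And>T. prec T S \<and> v \<in> T \<Longrightarrow> card Ss \<le> card T"
    using ex_has_least_nat[of "\<lambda>T. prec T S \<and> v \<in> T" S1 card] S1 by blast
  have hat: "v \<in> hat F prec Ss"
  proof -
    { fix T assume "T \<in> F" "prec T Ss" "v \<in> T"
      hence "prec T S" using Ss tr by blast
      hence False using min[of T] sm[OF \<open>prec T Ss\<close>] \<open>v \<in> T\<close> by force }
    thus ?thesis using Ss unfolding hat_def by blast
  qed
  have wit: "is_witness F prec Ss v S"
    unfolding is_witness_def
  proof (intro conjI)
    show "S \<in> F" by fact
    show "prec Ss S" using Ss by blast
    show "v \<in> Ss - S" using Ss vS by blast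
    show "\<not> (\<exists>S''\<in>F. prec Ss S'' \<and> v \<in> Ss - S'' \<and> prec S'' S)"
    proof
      assume "\<exists>S''\<in>F. prec Ss S'' \<and> v \<in> Ss - S'' \<and> prec S'' S"
      then obtain S2 where S2: "prec Ss S2" "v \<in> Ss - S2" "prec S2 S" by blast
      obtain P where P: "(S2 = P \<or> prec S2 P) \<and> prec P S"
        and mx: "\<And>T. (S2 = T \<or> prec S2 T) \<and> prec T S \<Longrightarrow> card T \<le> card P"
        using ex_has_greatest_nat[of "\<lambda>T. (S2 = T \<or> prec S2 T) \<and> prec T S" S2 card "card S"] S2 sm
        by blast
      have "P \<in> Pred F prec S"
      proof -
        { fix T assume "T \<in> F" "prec P T" "prec T S"
          hence "(S2 = T \<or> prec S2 T) \<and> prec T S" using P tr by blast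
          hence False using mx sm[OF \<open>prec P T\<close>] by force }
        thus ?thesis using P inF unfolding Pred_def by blast
      qed
      moreover have "covers F prec P v"
      proof -
        have "prec Ss P" using P S2 tr by blast
        moreover have "v \<in> Ss - P" using P S2 te by blast
        ultimately show ?thesis unfolding covers_def using inF by blast
      qed
      ultimately show False using nc by blast
    qed
  qed
  show ?thesis using Ss hat wit inF by blast
qed

end
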